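(* Let $n$ be a positive integer. Call a function $C:[n]^3\to\mathbb{Z}_{\ge 0}$ an SBC$(n)$ if its $3n^2$ line sums (the sums $\sum_{i} C(i,j,k)$ for fixed $(j,k)$, $\sum_{j} C(i,j,k)$ for fixed $(i,k)$, and $\sum_{k} C(i,j,k)$ for fixed $(i,j)$) are exactly the integers $0,1,\dots,3n^2-1$, each occurring once. If there exists an SBC$(n)$, then there exists an SBC$(mn)$ for every positive integer $m$.
   Context: $[n]=\{1,2,\dots,n\}$; indices in the line sums range over $[n]$. *)

theory Defs
  imports Main "HOL-Library.Multiset"
begin

text \<open>A function C : [n]^3 -> Z_{>=0} is modelled as C :: nat => nat => nat => nat,
  only its values on {1..n}^3 matter. The multiset of its 3n^2 line sums.\<close>

definition line_sums :: "nat \<Rightarrow> (nat \<Rightarrow> nat \<Rightarrow> nat \<Rightarrow> nat) \<Rightarrow> nat multiset" where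
  "line_sums n C =
     image_mset (\<lambda>(j,k). \<Sum>i\<in>{1..n}. C i j k) (mset_set ({1..n} \<times> {1..n}))
   + image_mset (\<lambda>(i,k). \<Sum>j\<in>{1..n}. C i j k) (mset_set ({1..n} \<times> {1..n}))
   + image_mset (\<lambda>(i,j). \<Sum>k\<in>{1..n}. C i j k) (mset_set ({1..n} \<times> {1..n}))"

definition SBC :: "nat \<Rightarrow> (nat \<Rightarrow> nat \<Rightarrow> nat \<Rightarrow> nat) \<Rightarrow> bool" where
  "SBC n C \<longleftrightarrow> line_sums n C = mset [0..<3 * n^2]"

end

theory Submission
  imports Defs
begin

lemma ms_bij:
  assumes "finite A" "finite S" "image_mset g (mset_set A) = mset_set S"
  shows "bij_betw g A S"
proof -
  have "set_mset (image_mset g (mset_set A)) = S" using assms by simp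
  hence im: "g ` A = S" using assms(1) by simp
  have "size (image_mset g (mset_set A)) = card S" using assms(3) by simp
  hence "card A = card S" by simp
  hence "inj_on g A" using im assms(1) by (simp add: eq_card_imp_inj_on)
  thus ?thesis using im by (simp add: bij_betw_def)
qed

definition gC :: "nat \<Rightarrow> (nat \<Rightarrow> nat \<Rightarrow> nat \<Rightarrow> nat) \<Rightarrow> nat \<times> nat \<times> nat \<Rightarrow> nat" where
  "gC n C = (\<lambda>(d,p,q). if d = 0 then (\<Sum>i\<in>{1..n}. C i p q)
      else if d = 1 then (\<Sum>j\<in>{1..n}. C p j q) else (\<Sum>k\<in>{1..n}. C p q k))"

lemma mset_three:
  fixes T :: "('b) set"
  assumes "finite T"
  shows "mset_set ({0,1,2::nat} \<times> T) = image_mset (Pair 0) (mset_set T)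
     + image_mset (Pair 1) (mset_set T) + image_mset (Pair 2) (mset_set T)"
proof -
  have e: "{0,1,2::nat} \<times> T = ({0} \<times> T \<union> {1} \<times> T) \<union> {2} \<times> T" by auto
  have "mset_set ({0,1,2::nat} \<times> T) = mset_set ({0} \<times> T) + mset_set ({1} \<times> T) + mset_set ({2::nat} \<times> T)"
    unfolding e
    apply (subst mset_set_Union)
    using assms apply auto[3]
    apply (subst mset_set_Union)
    using assms apply auto
    done
  also have "\<dots> = image_mset (Pair 0) (mset_set T)
     + image_mset (Pair 1) (mset_set T) + image_mset (Pair 2) (mset_set T)"
  proof -
    have s: "\<And>d::nat. {d} \<times> T = Pair d ` T" by auto
    show ?thesis by (simp add: image_mset_mset_set inj_on_def s)
  qed
  finally show ?thesis .
qed

lemma line_sums_g: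
  "line_sums n C = image_mset (gC n C) (mset_set ({0,1,2::nat} \<times> ({1..n} \<times> {1..n})))"
  unfolding line_sums_def mset_three[OF finite_SigmaI[OF finite_atLeastAtMost finite_atLeastAtMost]]
  by (simp add: gC_def image_mset.compositionality o_def case_prod_unfold)

lemma SBC_bij: "SBC n C \<longleftrightarrow> bij_betw (gC n C) ({0,1,2::nat} \<times> ({1..n} \<times> {1..n})) {0..<3*n^2}"
proof
  assume "SBC n C"
  thus "bij_betw (gC n C) ({0,1,2::nat} \<times> ({1..n} \<times> {1..n})) {0..<3*n^2}"
    unfolding SBC_def line_sums_g by (intro ms_bij) auto
next
  assume "bij_betw (gC n C) ({0,1,2::nat} \<times> ({1..n} \<times> {1..n})) {0..<3*n^2}"
  thus "SBC n C" unfolding SBC_def line_sums_g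
    by (simp add: image_mset_mset_set bij_betw_def)
qed

definition blk :: "nat \<Rightarrow> nat \<Rightarrow> nat" where "blk n x = (x - 1) div n"
definition pp :: "nat \<Rightarrow> nat \<Rightarrow> nat" where "pp n x = (x - 1) mod n + 1"
definition a0 :: "nat \<Rightarrow> nat \<Rightarrow> nat" where "a0 m b = (m - b mod m) mod m"

lemma a0_lt: "m > 0 \<Longrightarrow> a0 m b < m"
  unfolding a0_def by simp

lemma a0_uniq:
  assumes "m > 0" "a < m"
  shows "(a + b) mod m = 0 \<longleftrightarrow> a = a0 m b"
proof -
  have r: "b mod m < m" using assms by simp
  have "(a + b) mod m = (a + b mod m) mod m" by (simp add: mod_add_right_eq)
  moreover have "(a + b mod m) mod m = 0 \<longleftrightarrow> a + b mod m = 0 \<or> a + b mod m = m"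
  proof
    assume h: "(a + b mod m) mod m = 0"
    have "a + b mod m < 2 * m" using assms(2) r by linarith
    then show "a + b mod m = 0 \<or> a + b mod m = m" using h
    proof (cases "a + b mod m < m")
      case False
      hence "(a + b mod m) mod m = a + b mod m - m"
        using \<open>a + b mod m < 2 * m\<close> by (simp add: le_mod_geq)
      then show ?thesis using h False by simp
    qed simp
  qed auto
  ultimately show ?thesis using assms r unfolding a0_def
    by (cases "b mod m = 0") auto
qed

lemma a0_self: "m > 0 \<Longrightarrow> (a0 m b + b) mod m = 0"
  using a0_uniq[OF _ a0_lt, of m b b] by simp

lemma blk_pp:
  assumes "n > 0" "i < n"
  shows "blk n (a*n+i+1) = a" "pp n (a*n+i+1) = i+1"
  using assms by (simp_all add: blk_def pp_def)

lemma blk_pp':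
  assumes "n > 0" "i < n"
  shows "blk n (Suc (a*n+i)) = a" "pp n (Suc (a*n+i)) = Suc i"
  using assms by (simp_all add: blk_def pp_def)

lemma range_props:
  assumes "n > 0" "x \<in> {1..m*n}"
  shows "blk n x < m" "pp n x \<in> {1..n}" "x = blk n x * n + pp n x"
proof -
  have "x - 1 < m*n" using assms by auto
  thus "blk n x < m" unfolding blk_def using assms by (simp add: less_mult_imp_div_less)
  show "pp n x \<in> {1..n}" unfolding pp_def using assms by (simp add: Suc_leI)
  show "x = blk n x * n + pp n x"
  proof -
    have "(x-1) div n * n + (x-1) mod n = x - 1" by (rule div_mult_mod_eq)
    thus ?thesis using assms unfolding blk_def pp_def by simp
  qed
qed

lemma reindex_sum:
  fixes n m :: nat and f :: "nat \<Rightarrow> 'a::comm_monoid_add"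
  assumes "n > 0"
  shows "(\<Sum>x\<in>{1..m*n}. f x) = (\<Sum>a<m. \<Sum>i<n. f (a*n+i+1))"
proof -
  have b: "bij_betw (\<lambda>(a,i). a*n+i+1) ({..<m}\<times>{..<n}) {1..m*n}"
  proof (rule bij_betw_byWitness[where f'="\<lambda>x. (blk n x, pp n x - 1)"])
    show "\<forall>a\<in>{..<m}\<times>{..<n}. (\<lambda>x. (blk n x, pp n x - 1)) ((\<lambda>(a,i). a*n+i+1) a) = a"
      using assms by (auto simp: blk_pp')
    show "\<forall>a'\<in>{1..m*n}. (\<lambda>(a,i). a*n+i+1) ((\<lambda>x. (blk n x, pp n x - 1)) a') = a'"
    proof
      fix x assume x: "x \<in> {1..m*n}"
      have "pp n x \<ge> 1" using range_props(2)[OF assms x] by simp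
      thus "(\<lambda>(a,i). a*n+i+1) ((\<lambda>x. (blk n x, pp n x - 1)) x) = x"
        using range_props(3)[OF assms x] by simp
    qed
    show "(\<lambda>(a,i). a*n+i+1) ` ({..<m}\<times>{..<n}) \<subseteq> {1..m*n}"
    proof clarsimp
      fix a i assume "a < m" "i < n"
      have "Suc a * n \<le> m * n" using \<open>a<m\<close> by (intro mult_le_mono1) simp
      thus "Suc (a*n+i) \<le> m*n" using \<open>i<n\<close> by simp
    qed
    show "(\<lambda>x. (blk n x, pp n x - 1)) ` {1..m*n} \<subseteq> {..<m}\<times>{..<n}"
    proof (rule image_subsetI)
      fix x assume x: "x \<in> {1..m*n}"
      have "blk n x < m" using range_props(1)[OF assms x] .
      moreover have "pp n x - 1 < n" using range_props(2)[OF assms x] by auto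
      ultimately show "(blk n x, pp n x - 1) \<in> {..<m}\<times>{..<n}" by simp
    qed
  qed
  have "(\<Sum>x\<in>{1..m*n}. f x) = (\<Sum>p\<in>{..<m}\<times>{..<n}. f ((\<lambda>(a,i). a*n+i+1) p))"
    using sum.reindex_bij_betw[OF b, of f] by simp
  also have "\<dots> = (\<Sum>a<m. \<Sum>i<n. f (a*n+i+1))"
    by (simp add: sum.cartesian_product case_prod_unfold)
  finally show ?thesis .
qed

lemma sum_delta_mod:
  assumes "m > 0"
  shows "(\<Sum>a<m. if (a + b) mod m = 0 then X a else 0) = (X (a0 m b) :: nat)"
proof -
  have "(\<Sum>a<m. if (a + b) mod m = 0 then X a else 0) = (\<Sum>a<m. if a = a0 m b then X a else 0)"
    using a0_uniq[OF assms] by (intro sum.cong) auto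
  also have "\<dots> = X (a0 m b)" using a0_lt[OF assms] by simp
  finally show ?thesis .
qed

lemma generic_sum:
  assumes "m > 0" "n > 0"
  shows "(\<Sum>x\<in>{1..m*n}. if (blk n x + \<beta>) mod m = 0 then m^2 * F (pp n x)
      + (if (pp n x + \<gamma>) mod n = 0 then V (blk n x) else 0) else 0)
    = m^2 * (\<Sum>i\<in>{1..n}. F i) + V (a0 m \<beta>)"
proof -
  have inner: "(\<Sum>i<n. m^2 * F (i+1) + (if (i + 1 + \<gamma>) mod n = 0 then V a else 0))
     = m^2 * (\<Sum>i\<in>{1..n}. F i) + V a" for a
  proof -
    have "(\<Sum>i<n. (if (i + (1 + \<gamma>)) mod n = 0 then V a else 0)) = V a"
      using sum_delta_mod[OF assms(2), of "1+\<gamma>" "\<lambda>_. V a"] by simp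
    moreover have "(\<Sum>i\<in>{1..n}. F i) = (\<Sum>i<n. F (i+1))"
      using sum.atLeast1_atMost_eq[of F n] by simp
    ultimately show ?thesis by (simp add: sum.distrib sum_distrib_left add.assoc)
  qed
  let ?G = "\<lambda>a i. m^2 * F (i+1) + (if (i + 1 + \<gamma>) mod n = 0 then V a else 0)"
  have "(\<Sum>x\<in>{1..m*n}. if (blk n x + \<beta>) mod m = 0 then m^2 * F (pp n x)
      + (if (pp n x + \<gamma>) mod n = 0 then V (blk n x) else 0) else 0)
     = (\<Sum>a<m. \<Sum>i<n. if (a + \<beta>) mod m = 0 then ?G a i else 0)"
    apply (subst reindex_sum[OF assms(2)])
    apply (intro sum.cong refl)
    using assms by (simp add: blk_pp')
  also have "\<dots> = (\<Sum>a<m. if (a + \<beta>) mod m = 0 then (\<Sum>i<n. ?G a i) else 0)"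
    by (intro sum.cong refl) simp
  also have "\<dots> = (\<Sum>a<m. if (a + \<beta>) mod m = 0 then m^2 * (\<Sum>i\<in>{1..n}. F i) + V a else 0)"
    using inner by (intro sum.cong refl) presburger
  also have "\<dots> = m^2 * (\<Sum>i\<in>{1..n}. F i) + V (a0 m \<beta>)"
    by (rule sum_delta_mod[OF assms(1)])
  finally show ?thesis .
qed


definition Dc :: "nat \<Rightarrow> nat \<Rightarrow> (nat \<Rightarrow> nat \<Rightarrow> nat \<Rightarrow> nat) \<Rightarrow> nat \<Rightarrow> nat \<Rightarrow> nat \<Rightarrow> nat" where
  "Dc m n C x y z = (if (blk n x + blk n y + blk n z) mod m = 0
     then m^2 * C (pp n x) (pp n y) (pp n z)
       + (if (pp n x + pp n y + pp n z) mod n = 0 then blk n y * m + blk n z else 0) else 0)"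

definition ww :: "nat \<Rightarrow> nat \<Rightarrow> nat \<Rightarrow> nat \<Rightarrow> nat" where
  "ww m d u v = (if d = 0 then u*m+v else if d = 1 then a0 m (u+v) * m + v else v*m + a0 m (u+v))"

lemma gD:
  assumes "m > 0" "n > 0"
  shows "gC (m*n) (Dc m n C) (d,p,q) = m^2 * gC n C (d, pp n p, pp n q) + ww m d (blk n p) (blk n q)"
proof -
  consider "d = 0" | "d = 1" | "d \<noteq> 0 \<and> d \<noteq> 1" by blast
  then show ?thesis
  proof cases
    case 1
    have "(\<Sum>x\<in>{1..m*n}. Dc m n C x p q) = (\<Sum>x\<in>{1..m*n}. if (blk n x + (blk n p + blk n q)) mod m = 0
       then m^2 * C (pp n x) (pp n p) (pp n q)
      + (if (pp n x + (pp n p + pp n q)) mod n = 0 then blk n p * m + blk n q else 0) else 0)"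
      by (intro sum.cong refl) (simp add: Dc_def add.assoc)
    also have "\<dots> = m^2 * (\<Sum>i\<in>{1..n}. C i (pp n p) (pp n q)) + (blk n p * m + blk n q)"
      using generic_sum[OF assms, where \<beta>="blk n p + blk n q" and \<gamma>="pp n p + pp n q" and F="\<lambda>i. C i (pp n p) (pp n q)" and V="\<lambda>_. blk n p * m + blk n q"] by simp
    finally show ?thesis using 1 by (simp add: gC_def ww_def)
  next
    case 2
    have e1: "\<And>y. blk n p + blk n y + blk n q = blk n y + (blk n p + blk n q)" by simp
    have e2: "\<And>y. pp n p + pp n y + pp n q = pp n y + (pp n p + pp n q)" by simp
    have "(\<Sum>y\<in>{1..m*n}. Dc m n C p y q) = (\<Sum>y\<in>{1..m*n}. if (blk n y + (blk n p + blk n q)) mod m = 0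
       then m^2 * C (pp n p) (pp n y) (pp n q)
      + (if (pp n y + (pp n p + pp n q)) mod n = 0 then blk n y * m + blk n q else 0) else 0)"
      by (intro sum.cong refl) (simp only: Dc_def e1 e2)
    also have "\<dots> = m^2 * (\<Sum>j\<in>{1..n}. C (pp n p) j (pp n q)) + (a0 m (blk n p + blk n q) * m + blk n q)"
      using generic_sum[OF assms, where \<beta>="blk n p + blk n q" and \<gamma>="pp n p + pp n q" and F="\<lambda>j. C (pp n p) j (pp n q)" and V="\<lambda>b. b * m + blk n q"] by simp
    finally show ?thesis using 2 by (simp add: gC_def ww_def)
  next
    case 3
    have e1: "\<And>z. blk n p + blk n q + blk n z = blk n z + (blk n p + blk n q)" by simp
    have e2: "\<And>z. pp n p + pp n q + pp n z = pp n z + (pp n p + pp n q)" by simp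
    have "(\<Sum>z\<in>{1..m*n}. Dc m n C p q z) = (\<Sum>z\<in>{1..m*n}. if (blk n z + (blk n p + blk n q)) mod m = 0
       then m^2 * C (pp n p) (pp n q) (pp n z)
      + (if (pp n z + (pp n p + pp n q)) mod n = 0 then blk n q * m + blk n z else 0) else 0)"
      by (intro sum.cong refl) (simp only: Dc_def e1 e2)
    also have "\<dots> = m^2 * (\<Sum>k\<in>{1..n}. C (pp n p) (pp n q) k) + (blk n q * m + a0 m (blk n p + blk n q))"
      using generic_sum[OF assms, where \<beta>="blk n p + blk n q" and \<gamma>="pp n p + pp n q" and F="\<lambda>k. C (pp n p) (pp n q) k" and V="\<lambda>c. blk n q * m + c"] by simp
    finally show ?thesis using 3 by (simp add: gC_def ww_def)
  qed
qed

lemma lt_sq: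
  fixes u v m :: nat
  assumes "u < m" "v < m"
  shows "u*m+v < m^2"
proof -
  have "(u+1)*m \<le> m*m" using assms by (intro mult_le_mono1) simp
  thus ?thesis using assms by (simp add: power2_eq_square)
qed

lemma lin_inj:
  fixes u v u' v' m :: nat
  assumes "v < m" "v' < m" "u*m+v = u'*m+v'"
  shows "u = u' \<and> v = v'"
proof -
  have a: "u = (u*m+v) div m" "v = (u*m+v) mod m" using assms(1) by simp_all
  have b: "u' = (u'*m+v') div m" "v' = (u'*m+v') mod m" using assms(2) by simp_all
  show ?thesis by (metis a b assms(3))
qed

lemma ww_lt:
  assumes "m > 0" "u < m" "v < m"
  shows "ww m d u v < m^2"
  unfolding ww_def using assms a0_lt[OF assms(1)] lt_sq by auto

lemma ww_inj:
  assumes "m > 0" "u < m" "v < m" "u' < m" "v' < m" "ww m d u v = ww m d u' v'"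
  shows "u = u' \<and> v = v'"
proof -
  consider "d = 0" | "d = 1" | "d \<noteq> 0 \<and> d \<noteq> 1" by blast
  then show ?thesis
  proof cases
    case 1
    hence h: "u*m+v = u'*m+v'" using assms(6) unfolding ww_def by simp
    show ?thesis using lin_inj[OF assms(3,5) h] .
  next
    case 2
    hence h: "a0 m (u+v) * m + v = a0 m (u'+v') * m + v'" using assms(6) unfolding ww_def by simp
    from lin_inj[OF assms(3) assms(5) h] have v: "v = v'" and c: "a0 m (u+v) = a0 m (u'+v)" by auto
    let ?c = "a0 m (u+v)"
    have "(?c + (u+v)) mod m = 0" using a0_self[OF assms(1)] by simp
    hence "(u + (?c + v)) mod m = 0" by (simp add: ac_simps)
    hence "u = a0 m (?c + v)" using a0_uniq[OF assms(1) assms(2)] by simp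
    moreover have "(?c + (u'+v)) mod m = 0" using a0_self[OF assms(1), of "u'+v"] c by simp
    hence "(u' + (?c + v)) mod m = 0" by (simp add: ac_simps)
    hence "u' = a0 m (?c + v)" using a0_uniq[OF assms(1) assms(4)] by simp
    ultimately show ?thesis using v by simp
  next
    case 3
    hence h: "v * m + a0 m (u+v) = v' * m + a0 m (u'+v')" using assms(6) unfolding ww_def by simp
    from lin_inj[OF a0_lt[OF assms(1)] a0_lt[OF assms(1)] h] have v: "v = v'" and c: "a0 m (u+v) = a0 m (u'+v)" by auto
    let ?c = "a0 m (u+v)"
    have "(?c + (u+v)) mod m = 0" using a0_self[OF assms(1)] by simp
    hence "(u + (?c + v)) mod m = 0" by (simp add: ac_simps)
    hence "u = a0 m (?c + v)" using a0_uniq[OF assms(1) assms(2)] by simp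
    moreover have "(?c + (u'+v)) mod m = 0" using a0_self[OF assms(1), of "u'+v"] c by simp
    hence "(u' + (?c + v)) mod m = 0" by (simp add: ac_simps)
    hence "u' = a0 m (?c + v)" using a0_uniq[OF assms(1) assms(4)] by simp
    ultimately show ?thesis using v by simp
  qed
qed

lemma divmod_uniq:
  fixes k c c' w w' :: nat
  assumes "w < k" "w' < k" "k*c + w = k*c' + w'"
  shows "c = c' \<and> w = w'"
  using lin_inj[OF assms(1,2), of c c'] assms(3) by (simp add: mult.commute)

lemma main_step:
  assumes "m > 0" "n > 0" "SBC n C"
  shows "SBC (m*n) (Dc m n C)"
proof -
  let ?N = "m*n"
  let ?g = "gC ?N (Dc m n C)"
  let ?A = "{0,1,2::nat} \<times> ({1..?N} \<times> {1..?N})"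
  let ?An = "{0,1,2::nat} \<times> ({1..n} \<times> {1..n})"
  let ?S = "{0..<3*?N^2}"
  have bC: "bij_betw (gC n C) ?An {0..<3*n^2}" using assms(3) SBC_bij by blast
  have injC: "inj_on (gC n C) ?An" using bC by (simp add: bij_betw_def)
  have rgC: "gC n C t < 3*n^2" if "t \<in> ?An" for t
    using bC that unfolding bij_betw_def by auto
  have inj: "inj_on ?g ?A"
  proof (rule inj_onI)
    fix t t' assume t: "t \<in> ?A" and t': "t' \<in> ?A" and eq: "?g t = ?g t'"
    obtain d p q where tt: "t = (d,p,q)" by (cases t) auto
    obtain d' p' q' where tt': "t' = (d',p',q')" by (cases t') auto
    have p: "p \<in> {1..?N}" "q \<in> {1..?N}" "d \<in> {0,1,2}" using t tt by auto
    have p': "p' \<in> {1..?N}" "q' \<in> {1..?N}" "d' \<in> {0,1,2}" using t' tt' by auto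
    have w1: "ww m d (blk n p) (blk n q) < m^2"
      using ww_lt[OF assms(1) range_props(1)[OF assms(2) p(1)] range_props(1)[OF assms(2) p(2)]] .
    have w2: "ww m d' (blk n p') (blk n q') < m^2"
      using ww_lt[OF assms(1) range_props(1)[OF assms(2) p'(1)] range_props(1)[OF assms(2) p'(2)]] .
    have "m^2 * gC n C (d, pp n p, pp n q) + ww m d (blk n p) (blk n q)
        = m^2 * gC n C (d', pp n p', pp n q') + ww m d' (blk n p') (blk n q')"
      using eq unfolding tt tt' gD[OF assms(1,2)] .
    from divmod_uniq[OF w1 w2 this] have
      c: "gC n C (d, pp n p, pp n q) = gC n C (d', pp n p', pp n q')" and
      w: "ww m d (blk n p) (blk n q) = ww m d' (blk n p') (blk n q')" by auto
    have "(d, pp n p, pp n q) \<in> ?An" using p range_props(2)[OF assms(2)] by auto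
    moreover have "(d', pp n p', pp n q') \<in> ?An" using p' range_props(2)[OF assms(2)] by auto
    ultimately have "(d, pp n p, pp n q) = (d', pp n p', pp n q')"
      using inj_onD[OF injC c] by blast
    hence e: "d = d'" "pp n p = pp n p'" "pp n q = pp n q'" by simp_all
    have bb: "blk n p = blk n p' \<and> blk n q = blk n q'"
      using ww_inj[OF assms(1) range_props(1)[OF assms(2) p(1)] range_props(1)[OF assms(2) p(2)]
          range_props(1)[OF assms(2) p'(1)] range_props(1)[OF assms(2) p'(2)]] w e(1) by simp
    have "blk n p * n + pp n p = blk n p' * n + pp n p'" "blk n q * n + pp n q = blk n q' * n + pp n q'"
      using bb e by simp_all
    hence "p = p'" "q = q'"
      using range_props(3)[OF assms(2) p(1)] range_props(3)[OF assms(2) p(2)]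
        range_props(3)[OF assms(2) p'(1)] range_props(3)[OF assms(2) p'(2)] by linarith+
    thus "t = t'" using tt tt' e(1) by simp
  qed
  have sub: "?g ` ?A \<subseteq> ?S"
  proof (rule image_subsetI)
    fix t assume t: "t \<in> ?A"
    obtain d p q where tt: "t = (d,p,q)" by (cases t) auto
    have p: "p \<in> {1..?N}" "q \<in> {1..?N}" "d \<in> {0,1,2}" using t tt by auto
    have w1: "ww m d (blk n p) (blk n q) < m^2"
      using ww_lt[OF assms(1) range_props(1)[OF assms(2) p(1)] range_props(1)[OF assms(2) p(2)]] .
    have "(d, pp n p, pp n q) \<in> ?An" using p range_props(2)[OF assms(2)] by auto
    hence c: "gC n C (d, pp n p, pp n q) + 1 \<le> 3*n^2" using rgC by (simp add: Suc_le_eq)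
    have "m^2 * gC n C (d, pp n p, pp n q) + ww m d (blk n p) (blk n q)
        < m^2 * gC n C (d, pp n p, pp n q) + m^2" using w1 by simp
    also have "\<dots> = m^2 * (gC n C (d, pp n p, pp n q) + 1)" by (simp add: algebra_simps)
    also have "\<dots> \<le> m^2 * (3*n^2)" using c by (intro mult_le_mono2)
    also have "\<dots> = 3*?N^2" by (simp add: power_mult_distrib)
    finally show "?g t \<in> ?S" unfolding tt gD[OF assms(1,2)] by simp
  qed
  have cardA: "card ?A = 3*?N^2" by (simp add: card_cartesian_product power2_eq_square)
  have "?g ` ?A = ?S"
  proof (rule card_subset_eq[OF finite_atLeastLessThan sub])
    have "card (?g ` ?A) = card ?A" by (rule card_image[OF inj])
    thus "card (?g ` ?A) = card ?S" using cardA by simp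
  qed
  hence "bij_betw ?g ?A ?S" using inj by (simp add: bij_betw_def)
  thus ?thesis using SBC_bij by blast
qed

theorem lemma2p1:
  fixes n :: nat
  assumes "n > 0"
    and "\<exists>C. SBC n C"
  shows "\<forall>m::nat. m > 0 \<longrightarrow> (\<exists>C. SBC (m * n) C)"
proof (intro allI impI)
  fix m :: nat assume "m > 0"
  obtain C where "SBC n C" using assms(2) by blast
  thus "\<exists>C. SBC (m * n) C" using main_step[OF \<open>m > 0\<close> assms(1)] by blast
qed

end
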